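(* Let $\mu$ be as in the context and assume Conditions (C1), (C2) and $\int\log_+\mathcal{N}(a)\,d\mu(a)<\infty$. Then for every $\eta>e^\gamma$ and $\varepsilon>0$ there exist $K\ge1$ and $a_1,\dots,a_K\in\mathrm{supp}(\mu)$ such that $g:=a_1\cdots a_K>0$ and $\|g\|\le\varepsilon\eta^K$; in particular $r(g)\le\varepsilon\eta^K$.
   Context: Notation: $G$ is the set of $d\times d$ nonnegative matrices; $|x|=\sum_i|x_i|$; $\|a\|$ operator norm, $r(a)$ spectral radius; $a>0$ means all entries strictly positive; $\mathbb{S}_+^{d-1}=\{x\in\mathbb{R}_+^d:|x|=1\}$; $\iota(a)=\inf_{x\in\mathbb{S}_+^{d-1}}|ax|$; $\mathcal{N}(a)=\max\{\|a\|,\iota(a)^{-1}\}$; $\log_+y=\max(\log y,0)$. Setting: random $A_i\in G$, $N=\#\{i:A_i\ne0\}<\infty$ a.s., $A_i\ne0$ iff $i\le N$; $\mu$: probability on $G$ with $\int f\,d\mu=\mathbb{E}[\sum_{i\le N}f(A_i)]/\mathbb{E}[N]$; $\Gamma$: multiplicative semigroup (with identity) generated by $\mathrm{supp}(\mu)$. $(M_i)$ i.i.d. of law $\mu$, $G_n=M_1\cdots M_n$, $\gamma=\lim_n\frac1n\mathbb{E}[\log\|G_n\|]$. (C1) $N\ge1$ a.s., $\mathbb{E}[N]\in(1,\infty)$, $A_i\in G$, $A_i\ne0$ iff $i\le N$. (C2) Every $a\in\Gamma$ has a strictly positive entry in each row and column; $\Gamma$ contains a strictly positive matrix. *)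

theory Defs
  imports "HOL-Probability.Probability"
begin

definition l1norm :: "real^'d \<Rightarrow> real" where
  "l1norm x = (\<Sum>i\<in>UNIV. \<bar>x $ i\<bar>)"

definition nonneg_mat :: "real^'d^'d \<Rightarrow> bool" where
  "nonneg_mat a \<longleftrightarrow> (\<forall>i j. a $ i $ j \<ge> 0)"

definition pos_mat :: "real^'d^'d \<Rightarrow> bool" where
  "pos_mat a \<longleftrightarrow> (\<forall>i j. a $ i $ j > 0)"

definition opnorm1 :: "real^'d^'d \<Rightarrow> real" where
  "opnorm1 a = (SUP x\<in>{x. l1norm x = 1}. l1norm (a *v x))"

definition simplex_plus :: "(real^'d) set" where
  "simplex_plus = {x. (\<forall>i. x $ i \<ge> 0) \<and> l1norm x = 1}"

definition iota :: "real^'d^'d \<Rightarrow> real" where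
  "iota a = (INF x\<in>simplex_plus. l1norm (a *v x))"

text \<open>log_+ N(a), with N(a) = max(||a||, iota(a)^-1), where iota(a)^-1 = infinity if iota(a)=0.\<close>
definition logpN :: "real^'d^'d \<Rightarrow> ennreal" where
  "logpN a = (if iota a = 0 then \<infinity>
              else ennreal (max 0 (ln (max (opnorm1 a) (inverse (iota a))))))"

definition cmat :: "real^'d^'d \<Rightarrow> complex^'d^'d" where
  "cmat a = (\<chi> i j. complex_of_real (a $ i $ j))"

definition spectral_radius :: "real^'d^'d \<Rightarrow> real" where
  "spectral_radius a =
     Max {cmod l | l. \<exists>v::complex^'d. v \<noteq> 0 \<and> cmat a *v v = l *s v}"

definition msupp :: "(real^'d^'d) measure \<Rightarrow> (real^'d^'d) set" where
  "msupp mu = {a. \<forall>e>0. emeasure mu (ball a e) > 0}"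

inductive_set gen_semigroup :: "(real^'d^'d) set \<Rightarrow> (real^'d^'d) set" for S where
  one: "mat 1 \<in> gen_semigroup S"
| mult: "g \<in> gen_semigroup S \<Longrightarrow> a \<in> S \<Longrightarrow> g ** a \<in> gen_semigroup S"

text \<open>Ordered product a m * a (m+1) * ... * a (n-1).\<close>
definition mprod :: "(nat \<Rightarrow> real^'d^'d) \<Rightarrow> nat \<Rightarrow> nat \<Rightarrow> real^'d^'d" where
  "mprod a m n = foldr (\<lambda>i acc. a i ** acc) [m..<n] (mat 1)"

definition lyap :: "(real^'d^'d) measure \<Rightarrow> real" where
  "lyap mu = lim (\<lambda>n. (\<integral>x. ln (opnorm1 (mprod x 0 n)) \<partial>(PiM {..<n} (\<lambda>_. mu))) / real n)"

end

theory Submission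
  imports Defs "HOL-Computational_Algebra.Fundamental_Theorem_Algebra"
begin


definition colsum :: "real^'d^'d \<Rightarrow> 'd \<Rightarrow> real" where
  "colsum a j = (\<Sum>i\<in>UNIV. \<bar>a $ i $ j\<bar>)"

definition cmax :: "real^'d^'d \<Rightarrow> real" where
  "cmax a = Max (range (colsum a))"

definition cmin :: "real^'d^'d \<Rightarrow> real" where
  "cmin a = Min (range (colsum a))"

lemma colsum_le_cmax: "colsum a j \<le> cmax a"
  unfolding cmax_def by (rule Max_ge) auto

lemma cmin_le_colsum: "cmin a \<le> colsum a j"
  unfolding cmin_def by (rule Min_le) auto

lemma cmax_attained: "\<exists>j. cmax a = colsum a j"
proof -
  have "Max (range (colsum a)) \<in> range (colsum a)" by (rule Max_in) auto
  then show ?thesis unfolding cmax_def by (metis imageE)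
qed

lemma cmin_attained: "\<exists>j. cmin a = colsum a j"
proof -
  have "Min (range (colsum a)) \<in> range (colsum a)" by (rule Min_in) auto
  then show ?thesis unfolding cmin_def by (metis imageE)
qed

lemma colsum_nonneg: "colsum a j \<ge> 0"
  unfolding colsum_def by (auto intro: sum_nonneg)

lemma cmin_nonneg: "cmin a \<ge> 0"
  using cmin_attained[of a] colsum_nonneg by metis

lemma cmin_le_cmax: "cmin a \<le> cmax a"
  using cmin_le_colsum[of a] colsum_le_cmax[of a] by (meson order_trans)

lemma l1norm_nonneg: "l1norm x \<ge> 0"
  unfolding l1norm_def by (auto intro: sum_nonneg)

lemma l1norm_axis: "l1norm (axis j (1::real)) = 1"
  unfolding l1norm_def axis_def
  by (simp add: if_distrib cong: if_cong)

lemma mv_axis: "(a *v axis j (1::real)) = (\<chi> i. a $ i $ j)"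
  unfolding matrix_vector_mult_def axis_def
  by (simp add: if_distrib cong: if_cong)

lemma l1norm_colsum: "l1norm (a *v axis j (1::real)) = colsum a j"
  unfolding mv_axis l1norm_def colsum_def by simp

lemma l1_bound: "l1norm (a *v x) \<le> cmax a * l1norm x"
proof -
  have "l1norm (a *v x) = (\<Sum>i\<in>UNIV. \<bar>\<Sum>j\<in>UNIV. a $ i $ j * x $ j\<bar>)"
    unfolding l1norm_def matrix_vector_mult_def by simp
  also have "\<dots> \<le> (\<Sum>i\<in>UNIV. \<Sum>j\<in>UNIV. \<bar>a $ i $ j\<bar> * \<bar>x $ j\<bar>)"
    by (intro sum_mono) (metis (no_types, lifting) abs_mult sum.cong sum_abs)
  also have "\<dots> = (\<Sum>j\<in>UNIV. colsum a j * \<bar>x $ j\<bar>)"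
    unfolding colsum_def by (subst sum.swap) (simp add: sum_distrib_right)
  also have "\<dots> \<le> (\<Sum>j\<in>UNIV. cmax a * \<bar>x $ j\<bar>)"
    by (intro sum_mono mult_right_mono colsum_le_cmax) auto
  also have "\<dots> = cmax a * l1norm x"
    unfolding l1norm_def by (simp add: sum_distrib_left)
  finally show ?thesis .
qed

lemma l1_lower:
  assumes "nonneg_mat a" "\<And>j. x $ j \<ge> 0"
  shows "cmin a * l1norm x \<le> l1norm (a *v x)"
proof -
  have "cmin a * l1norm x = (\<Sum>j\<in>UNIV. cmin a * \<bar>x $ j\<bar>)"
    unfolding l1norm_def by (simp add: sum_distrib_left)
  also have "\<dots> \<le> (\<Sum>j\<in>UNIV. colsum a j * \<bar>x $ j\<bar>)"
    by (intro sum_mono mult_right_mono cmin_le_colsum) auto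
  also have "\<dots> = (\<Sum>i\<in>UNIV. \<Sum>j\<in>UNIV. \<bar>a $ i $ j\<bar> * \<bar>x $ j\<bar>)"
    unfolding colsum_def by (subst sum.swap) (simp add: sum_distrib_right)
  also have "\<dots> = (\<Sum>i\<in>UNIV. \<bar>\<Sum>j\<in>UNIV. a $ i $ j * x $ j\<bar>)"
    using assms unfolding nonneg_mat_def
    by (intro sum.cong refl) (simp add: abs_of_nonneg sum_nonneg)
  also have "\<dots> = l1norm (a *v x)"
    unfolding l1norm_def matrix_vector_mult_def by simp
  finally show ?thesis .
qed

lemma opnorm1_eq: "opnorm1 a = cmax a"
  unfolding opnorm1_def
proof (rule cSup_eq_maximum)
  obtain j where j: "cmax a = colsum a j" using cmax_attained by blast
  show "cmax a \<in> (\<lambda>x. l1norm (a *v x)) ` {x. l1norm x = 1}"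
    by (rule image_eqI[of _ _ "axis j 1"]) (auto simp: l1norm_axis l1norm_colsum j)
  show "\<And>y. y \<in> (\<lambda>x. l1norm (a *v x)) ` {x. l1norm x = 1} \<Longrightarrow> y \<le> cmax a"
  proof -
    fix y assume "y \<in> (\<lambda>x. l1norm (a *v x)) ` {x. l1norm x = 1}"
    then obtain x where "l1norm x = 1" "y = l1norm (a *v x)" by blast
    then show "y \<le> cmax a" using l1_bound[of a x] by simp
  qed
qed

lemma iota_eq: assumes "nonneg_mat a" shows "iota a = cmin a"
  unfolding iota_def
proof (rule cInf_eq_minimum)
  obtain j where j: "cmin a = colsum a j" using cmin_attained by blast
  show "cmin a \<in> (\<lambda>x. l1norm (a *v x)) ` simplex_plus"
    by (rule image_eqI[of _ _ "axis j 1"]) (auto simp: simplex_plus_def l1norm_axis l1norm_colsum j, simp add: axis_def)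
  show "\<And>y. y \<in> (\<lambda>x. l1norm (a *v x)) ` simplex_plus \<Longrightarrow> cmin a \<le> y"
    using l1_lower[OF assms] unfolding simplex_plus_def by fastforce
qed

lemma nonneg_mult: "nonneg_mat a \<Longrightarrow> nonneg_mat b \<Longrightarrow> nonneg_mat (a ** b)"
  unfolding nonneg_mat_def matrix_matrix_mult_def by (auto intro!: sum_nonneg)

lemma nonneg_one: "nonneg_mat (mat 1 :: real^'d^'d)"
  unfolding nonneg_mat_def mat_def by auto

lemma cmax_mult: "cmax (a ** b) \<le> cmax a * cmax b"
proof -
  obtain j where j: "cmax (a ** b) = colsum (a ** b) j" using cmax_attained by blast
  have "colsum (a ** b) j = l1norm (a *v (b *v axis j 1))"
    by (simp add: l1norm_colsum[symmetric] matrix_vector_mul_assoc)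
  also have "\<dots> \<le> cmax a * l1norm (b *v axis j 1)" by (rule l1_bound)
  also have "\<dots> \<le> cmax a * cmax b"
    using cmin_le_cmax[of a] cmin_nonneg[of a]
    by (intro mult_left_mono) (auto simp: l1norm_colsum colsum_le_cmax)
  finally show ?thesis using j by simp
qed

lemma cmin_mult: assumes "nonneg_mat a" "nonneg_mat b"
  shows "cmin a * cmin b \<le> cmin (a ** b)"
proof -
  obtain j where j: "cmin (a ** b) = colsum (a ** b) j" using cmin_attained by blast
  have "cmin a * cmin b \<le> cmin a * l1norm (b *v axis j 1)"
    using cmin_nonneg[of a]
    by (intro mult_left_mono) (auto simp: l1norm_colsum cmin_le_colsum)
  also have "\<dots> \<le> l1norm (a *v (b *v axis j 1))"
    using assms by (intro l1_lower) (auto simp: mv_axis nonneg_mat_def)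
  also have "\<dots> = colsum (a ** b) j"
    by (simp add: l1norm_colsum[symmetric] matrix_vector_mul_assoc)
  finally show ?thesis using j by simp
qed

lemma cmax_one: "cmax (mat 1 :: real^'d^'d) = 1"
proof -
  have "colsum (mat 1 :: real^'d^'d) j = 1" for j
    unfolding colsum_def mat_def by (simp add: if_distrib cong: if_cong)
  then show ?thesis unfolding cmax_def by simp
qed

lemma cmin_one: "cmin (mat 1 :: real^'d^'d) = 1"
proof -
  have "colsum (mat 1 :: real^'d^'d) j = 1" for j
    unfolding colsum_def mat_def by (simp add: if_distrib cong: if_cong)
  then show ?thesis unfolding cmin_def by simp
qed


definition wprod :: "(real^'d^'d) list \<Rightarrow> real^'d^'d" where
  "wprod xs = foldr (\<lambda>x acc. x ** acc) xs (mat 1)"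

lemma wprod_Nil[simp]: "wprod [] = mat 1" by (simp add: wprod_def)
lemma wprod_Cons[simp]: "wprod (x # xs) = x ** wprod xs" by (simp add: wprod_def)

lemma wprod_append: "wprod (xs @ ys) = wprod xs ** wprod ys"
  by (induction xs) (auto simp: matrix_mul_assoc matrix_mul_lid)

lemma mprod_wprod: "mprod a m n = wprod (map a [m..<n])"
  unfolding mprod_def wprod_def by (simp add: foldr_map o_def)

lemma mprod_split: "m \<le> k \<Longrightarrow> k \<le> n \<Longrightarrow> mprod a m n = mprod a m k ** mprod a k n"
  unfolding mprod_wprod
  by (metis map_append upt_add_eq_append le_add_diff_inverse wprod_append)

lemma mprod_cong: "(\<And>i. m \<le> i \<Longrightarrow> i < n \<Longrightarrow> a i = b i) \<Longrightarrow> mprod a m n = mprod b m n"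
  unfolding mprod_wprod by (intro arg_cong[where f=wprod] map_cong) auto

lemma mprod_shift: "mprod a (m + k) (n + k) = mprod (\<lambda>i. a (i + k)) m n"
proof -
  have "map a [m + k..<n + k] = map (\<lambda>i. a (i + k)) [m..<n]"
    by (induction n) (auto)
  then show ?thesis unfolding mprod_wprod by simp
qed

lemma mprod_Suc: "m \<le> n \<Longrightarrow> mprod a m (Suc n) = mprod a m n ** a n"
  unfolding mprod_wprod by (simp add: wprod_append matrix_mul_rid)

lemma mprod_empty: "mprod a m m = mat 1"
  unfolding mprod_wprod by simp

lemma wprod_nonneg: "(\<And>x. x \<in> set xs \<Longrightarrow> nonneg_mat x) \<Longrightarrow> nonneg_mat (wprod xs)"
  by (induction xs) (auto intro: nonneg_mult nonneg_one)

lemma mprod_cmax: "cmax (mprod a 0 n) \<le> (\<Prod>i<n. cmax (a i))"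
proof (induction n)
  case 0 then show ?case by (simp add: mprod_empty cmax_one)
next
  case (Suc n)
  have "cmax (mprod a 0 (Suc n)) \<le> cmax (mprod a 0 n) * cmax (a n)"
    by (simp add: mprod_Suc cmax_mult)
  also have "\<dots> \<le> (\<Prod>i<n. cmax (a i)) * cmax (a n)"
    using Suc cmin_le_cmax[of "a n"] cmin_nonneg[of "a n"] by (intro mult_right_mono) auto
  finally show ?case by simp
qed

lemma mprod_nonneg: "(\<And>i. i < n \<Longrightarrow> nonneg_mat (a i)) \<Longrightarrow> nonneg_mat (mprod a m n)"
  unfolding mprod_wprod by (intro wprod_nonneg) auto

lemma mprod_cmin: "(\<And>i. i < n \<Longrightarrow> nonneg_mat (a i)) \<Longrightarrow> (\<Prod>i<n. cmin (a i)) \<le> cmin (mprod a 0 n)"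
proof (induction n)
  case 0 then show ?case by (simp add: mprod_empty cmin_one)
next
  case (Suc n)
  have "(\<Prod>i<Suc n. cmin (a i)) = (\<Prod>i<n. cmin (a i)) * cmin (a n)" by simp
  also have "\<dots> \<le> cmin (mprod a 0 n) * cmin (a n)"
    using Suc cmin_nonneg[of "a n"] by (intro mult_right_mono) auto
  also have "\<dots> \<le> cmin (mprod a 0 (Suc n))"
    using Suc.prems by (simp add: mprod_Suc cmin_mult mprod_nonneg)
  finally show ?case .
qed

lemma gen_semigroup_mult: "h \<in> gen_semigroup S \<Longrightarrow> g \<in> gen_semigroup S \<Longrightarrow> g ** h \<in> gen_semigroup S"
proof (induction h rule: gen_semigroup.induct)
  case one then show ?case by (simp add: matrix_mul_rid)
next
  case (mult h a) then show ?case
    by (metis gen_semigroup.mult matrix_mul_assoc)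
qed

lemma wprod_gen: "set xs \<subseteq> S \<Longrightarrow> wprod xs \<in> gen_semigroup S"
proof (induction xs)
  case Nil then show ?case by (simp add: gen_semigroup.one)
next
  case (Cons x xs)
  have "x \<in> gen_semigroup S"
    using Cons.prems gen_semigroup.mult[OF gen_semigroup.one, of x S] by (simp add: matrix_mul_lid)
  then show ?case using Cons by (simp add: gen_semigroup_mult)
qed

lemma gen_wprod: "g \<in> gen_semigroup S \<Longrightarrow> \<exists>xs. set xs \<subseteq> S \<and> g = wprod xs"
proof (induction g rule: gen_semigroup.induct)
  case one then show ?case by (intro exI[of _ "[]"]) simp
next
  case (mult g a)
  then obtain xs where "set xs \<subseteq> S" "g = wprod xs" by blast
  then show ?case
    using mult by (intro exI[of _ "xs @ [a]"]) (simp add: wprod_append matrix_mul_rid)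
qed

lemma wprod_replicate_cmax: "cmax (wprod (concat (replicate m xs))) \<le> cmax (wprod xs) ^ m"
proof (induction m)
  case 0 then show ?case by (simp add: cmax_one)
next
  case (Suc m)
  have "cmax (wprod (concat (replicate (Suc m) xs))) \<le> cmax (wprod xs) * cmax (wprod (concat (replicate m xs)))"
    by (simp add: wprod_append cmax_mult)
  also have "\<dots> \<le> cmax (wprod xs) * cmax (wprod xs) ^ m"
    using Suc cmin_le_cmax[of "wprod xs"] cmin_nonneg[of "wprod xs"] by (intro mult_left_mono) auto
  finally show ?case by simp
qed

lemma pos_sandwich:
  assumes "pos_mat g" "nonneg_mat x" "x $ k $ l > 0"
  shows "pos_mat (g ** x ** g)"
  unfolding pos_mat_def
proof (intro allI)
  fix i j
  have gx: "(g ** x) $ i $ l > 0"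
  proof -
    have "(g ** x) $ i $ l = (\<Sum>k'\<in>UNIV. g $ i $ k' * x $ k' $ l)" by (simp add: matrix_matrix_mult_def)
    also have "\<dots> \<ge> g $ i $ k * x $ k $ l"
      using assms unfolding pos_mat_def nonneg_mat_def
      by (intro member_le_sum) (auto, meson less_imp_le mult_nonneg_nonneg)
    finally show ?thesis using assms unfolding pos_mat_def by (smt (verit) mult_pos_pos)
  qed
  have gxn: "nonneg_mat (g ** x)"
    using assms by (intro nonneg_mult) (auto simp: pos_mat_def nonneg_mat_def less_imp_le)
  have "(g ** x ** g) $ i $ j = (\<Sum>l'\<in>UNIV. (g ** x) $ i $ l' * g $ l' $ j)" by (simp add: matrix_matrix_mult_def)
  also have "\<dots> \<ge> (g ** x) $ i $ l * g $ l $ j"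
    using assms gxn unfolding pos_mat_def nonneg_mat_def
    by (intro member_le_sum) (auto, meson less_imp_le mult_nonneg_nonneg)
  finally show "(g ** x ** g) $ i $ j > 0" using gx assms unfolding pos_mat_def by (smt (verit) mult_pos_pos)
qed


lemma det_zero_iff: "det (B :: complex^'d^'d) = 0 \<longleftrightarrow> (\<exists>v. v \<noteq> 0 \<and> B *v v = 0)"
  using invertible_det_nz[of B] invertible_left_inverse[of B] matrix_left_invertible_ker[of B]
  by blast

lemma mat_mv: "(mat l :: complex^'d^'d) *v v = l *s v"
proof -
  have "(\<Sum>j\<in>UNIV. (if i = j then l else 0) * v $ j) = l * v $ i" for i
    by (simp add: if_distrib[of "\<lambda>x. x * _"] cong: if_cong)
  then show ?thesis by (simp add: vec_eq_iff matrix_vector_mult_def mat_def)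
qed

lemma eig_iff: "(\<exists>v. v \<noteq> 0 \<and> cmat a *v v = l *s v) \<longleftrightarrow> det (cmat a - mat l) = 0"
  unfolding det_zero_iff by (simp add: matrix_vector_mult_diff_rdistrib mat_mv)

definition cpoly :: "real^'d^'d \<Rightarrow> complex poly" where
  "cpoly a = (\<Sum>p\<in>{p. p permutes (UNIV::'d set)}.
      smult (of_int (sign p)) (\<Prod>i\<in>UNIV. [: cmat a $ i $ p i, - (if p i = i then 1 else 0) :]))"

lemma poly_cpoly: "poly (cpoly a) l = det (cmat a - mat l)"
  unfolding cpoly_def det_def poly_sum poly_prod
  by (intro sum.cong refl) (auto simp: poly_prod mat_def intro!: prod.cong)

lemma coeff_cpoly: fixes a :: "real^'d^'d" shows "coeff (cpoly a) CARD('d) = (-1) ^ CARD('d)"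
proof -
  let ?f = "\<lambda>p. smult (of_int (sign p)) (\<Prod>i\<in>UNIV. [: cmat a $ i $ p i, - (if p i = i then 1 else 0) :])
     :: complex poly"
  have other: "coeff (?f p) CARD('d) = 0" if "p permutes UNIV" "p \<noteq> id" for p
  proof -
    obtain k where k: "p k \<noteq> k" using \<open>p \<noteq> id\<close> by (auto simp: fun_eq_iff)
    have "degree (\<Prod>i\<in>UNIV. [: cmat a $ i $ p i, - (if p i = i then 1 else 0) :]) \<le>
       sum (degree \<circ> (\<lambda>i. [: cmat a $ i $ p i, - (if p i = i then 1 else 0) :])) UNIV"
      by (rule degree_prod_sum_le) simp
    also have "\<dots> < CARD('d)"
    proof -
      have le1: "(degree \<circ> (\<lambda>i. [: cmat a $ i $ p i, - (if p i = i then 1 else 0) :])) i \<le> 1" for i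
        by simp
      have "sum (degree \<circ> (\<lambda>i. [: cmat a $ i $ p i, - (if p i = i then 1 else 0) :])) UNIV
          < sum (\<lambda>i. 1::nat) (UNIV::'d set)"
      proof (rule sum_strict_mono_ex1)
        show "\<forall>x\<in>UNIV. (degree \<circ> (\<lambda>i. [: cmat a $ i $ p i, - (if p i = i then 1 else 0) :])) x \<le> 1"
          using le1 by blast
        show "\<exists>x\<in>UNIV. (degree \<circ> (\<lambda>i. [: cmat a $ i $ p i, - (if p i = i then 1 else 0) :])) x < 1"
          using k by (intro bexI[of _ k]) auto
      qed simp
      then show ?thesis by simp
    qed
    finally show ?thesis by (simp add: coeff_eq_0)
  qed
  have idc: "coeff (?f id) CARD('d) = (-1) ^ CARD('d)"
  proof -
    let ?q = "\<Prod>i\<in>(UNIV::'d set). [: cmat a $ i $ i, - 1 :]"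
    have "?f id = ?q" by (simp add: sign_id)
    moreover have "degree ?q = CARD('d)"
      by (subst degree_prod_eq_sum_degree) auto
    moreover have "lead_coeff ?q = (-1) ^ CARD('d)"
      by (simp add: lead_coeff_prod)
    ultimately show ?thesis by simp
  qed
  have "coeff (cpoly a) CARD('d) = (\<Sum>p\<in>{p. p permutes (UNIV::'d set)}. coeff (?f p) CARD('d))"
    unfolding cpoly_def coeff_sum ..
  also have "\<dots> = coeff (?f id) CARD('d) +
      (\<Sum>p\<in>{p. p permutes (UNIV::'d set)} - {id}. coeff (?f p) CARD('d))"
    by (rule sum.remove) (auto simp: permutes_id finite_permutations)
  also have "(\<Sum>p\<in>{p. p permutes (UNIV::'d set)} - {id}. coeff (?f p) CARD('d)) = 0"
    by (intro sum.neutral ballI other) auto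
  finally show ?thesis using idc by simp
qed

lemma cpoly_nonconst: fixes a :: "real^'d^'d" shows "degree (cpoly a) \<ge> CARD('d)" "cpoly a \<noteq> 0"
proof -
  have "coeff (cpoly a) CARD('d) \<noteq> 0" by (simp add: coeff_cpoly)
  then show "degree (cpoly a) \<ge> CARD('d)" "cpoly a \<noteq> 0"
    by (auto intro: le_degree)
qed

lemma eig_bound:
  assumes "v \<noteq> 0" "cmat a *v v = l *s v"
  shows "cmod l \<le> cmax a"
proof -
  let ?n = "\<lambda>v::complex^'d. \<Sum>j\<in>UNIV. cmod (v $ j)"
  have pos: "?n v > 0"
  proof -
    obtain j where "v $ j \<noteq> 0" using assms(1) by (auto simp: vec_eq_iff)
    then have "cmod (v $ j) > 0" by simp
    also have "cmod (v $ j) \<le> ?n v" by (rule member_le_sum) auto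
    finally show ?thesis .
  qed
  have "cmod l * ?n v = (\<Sum>i\<in>UNIV. cmod ((l *s v) $ i))"
    by (simp add: sum_distrib_left norm_mult)
  also have "\<dots> = (\<Sum>i\<in>UNIV. cmod (\<Sum>j\<in>UNIV. cmat a $ i $ j * v $ j))"
    using assms(2)[symmetric] by (simp add: matrix_vector_mult_def)
  also have "\<dots> \<le> (\<Sum>i\<in>UNIV. \<Sum>j\<in>UNIV. \<bar>a $ i $ j\<bar> * cmod (v $ j))"
    by (intro sum_mono order_trans[OF norm_sum]) (simp add: cmat_def norm_mult)
  also have "\<dots> = (\<Sum>j\<in>UNIV. colsum a j * cmod (v $ j))"
    unfolding colsum_def by (subst sum.swap) (simp add: sum_distrib_right)
  also have "\<dots> \<le> (\<Sum>j\<in>UNIV. cmax a * cmod (v $ j))"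
    by (intro sum_mono mult_right_mono colsum_le_cmax) auto
  also have "\<dots> = cmax a * ?n v" by (simp add: sum_distrib_left)
  finally show ?thesis using pos by simp
qed

lemma spectral_radius_le: fixes a :: "real^'d^'d" shows "spectral_radius a \<le> cmax a"
proof -
  let ?E = "{l. \<exists>v::complex^'d. v \<noteq> 0 \<and> cmat a *v v = l *s v}"
  have E: "?E = {l. poly (cpoly a) l = 0}"
    by (simp add: eig_iff poly_cpoly)
  have fin: "finite ?E" unfolding E using cpoly_nonconst(2) by (rule poly_roots_finite)
  have c0: "0 < CARD('d)" by simp
  have "\<not> constant (poly (cpoly a))"
  proof -
    have "degree (cpoly a) \<noteq> 0" using cpoly_nonconst(1)[of a] c0 by linarith
    then show ?thesis by (simp add: constant_degree)
  qed
  then obtain z where "poly (cpoly a) z = 0" using fundamental_theorem_of_algebra by blast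
  then have ne: "?E \<noteq> {}" unfolding E by blast
  have eq: "{cmod l | l. \<exists>v::complex^'d. v \<noteq> 0 \<and> cmat a *v v = l *s v} = cmod ` ?E" by blast
  show ?thesis unfolding spectral_radius_def eq
    using fin ne eig_bound by (intro Max.boundedI) auto
qed


lemma sub_iter:
  fixes s :: "nat \<Rightarrow> real"
  assumes sub: "\<And>m n. s (m + n) \<le> s m + s n"
  shows "s (q * k + r) \<le> real q * s k + s r"
proof (induction q)
  case 0 then show ?case by simp
next
  case (Suc q)
  have "s (Suc q * k + r) = s (k + (q * k + r))" by (simp add: algebra_simps)
  also have "\<dots> \<le> s k + s (q * k + r)" by (rule sub)
  also have "\<dots> \<le> s k + (real q * s k + s r)" using Suc by simp
  finally show ?case by (simp add: algebra_simps)
qed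

lemma fekete:
  fixes s :: "nat \<Rightarrow> real"
  assumes sub: "\<And>m n. s (m + n) \<le> s m + s n"
    and low: "\<And>n. real n * c \<le> s n"
  shows "convergent (\<lambda>n. s n / real n)"
proof -
  let ?S = "(\<lambda>n. s n / real n) ` {1..}"
  define L where "L = Inf ?S"
  have ne: "?S \<noteq> {}" by auto
  have bdd: "bdd_below ?S"
  proof (rule bdd_belowI[of _ c])
    fix x assume "x \<in> ?S"
    then obtain n where n: "n \<ge> 1" "x = s n / real n" by auto
    then have "c \<le> s n / real n" using low[of n] by (simp add: field_simps)
    then show "c \<le> x" using n by simp
  qed
  have lowL: "L \<le> s n / real n" if "n \<ge> 1" for n
    unfolding L_def using that bdd by (intro cInf_lower) auto
  have "(\<lambda>n. s n / real n) \<longlonglongrightarrow> L"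
  proof (rule LIMSEQ_I)
    fix r :: real assume r: "r > 0"
    have "Inf ?S < L + r / 2" using r L_def by simp
    then obtain k where k: "k \<ge> 1" "s k / real k < L + r / 2"
      using cInf_less_iff[OF ne bdd] by auto
    define C where "C = \<bar>s k\<bar> + (\<Sum>j<k. \<bar>s j\<bar>)"
    have C0: "C \<ge> 0" unfolding C_def by (auto intro: sum_nonneg)
    obtain N :: nat where N: "real N > 2 * C / r" using reals_Archimedean2 by blast
    show "\<exists>no. \<forall>n\<ge>no. norm (s n / real n - L) < r"
    proof (intro exI[of _ "Suc N"] allI impI)
      fix n assume n: "Suc N \<le> n"
      then have n1: "n \<ge> 1" and npos: "real n > 0" by auto
      define q where "q = n div k"
      define j where "j = n mod k"
      have nqk: "n = q * k + j" unfolding q_def j_def by simp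
      have jk: "j < k" unfolding j_def using k by simp
      have "s n \<le> real q * s k + s j" unfolding nqk by (rule sub_iter[OF sub])
      also have "\<dots> \<le> real n * (s k / real k) + C"
      proof -
        have eq: "real n * (s k / real k) = real q * s k + real j * (s k / real k)"
          using k by (simp add: nqk field_simps)
        have "\<bar>real j * (s k / real k)\<bar> \<le> \<bar>s k\<bar>"
        proof -
          have "\<bar>real j * (s k / real k)\<bar> = (real j / real k) * \<bar>s k\<bar>"
            by (simp add: abs_mult)
          also have "\<dots> \<le> 1 * \<bar>s k\<bar>"
            using jk by (intro mult_right_mono) auto
          finally show ?thesis by simp
        qed
        moreover have "\<bar>s j\<bar> \<le> (\<Sum>j<k. \<bar>s j\<bar>)"
          using jk by (intro member_le_sum) auto
        ultimately show ?thesis unfolding eq C_def by linarith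
      qed
      finally have sn: "s n \<le> real n * (s k / real k) + C" .
      have "s n / real n \<le> s k / real k + C / real n"
        using sn npos by (simp add: field_simps)
      also have "C / real n < r / 2"
      proof -
        have "2 * C / r < real n" using N n by linarith
        then have "2 * C < real n * r" using r by (simp add: field_simps)
        then show ?thesis using npos by (simp add: field_simps)
      qed
      finally have up: "s n / real n < L + r" using k by linarith
      have "L \<le> s n / real n" using lowL n1 by simp
      then show "norm (s n / real n - L) < r" using up by simp
    qed
  qed
  then show ?thesis by (rule convergentI)
qed


lemma cont_entry: "continuous_on UNIV (\<lambda>a::real^'d^'d. a $ i $ j)"
  by (intro continuous_on_component continuous_on_id)

lemma meas_entry[measurable]: "(\<lambda>a::real^'d^'d. a $ i $ j) \<in> borel_measurable borel"
  by (rule borel_measurable_continuous_onI[OF cont_entry])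

lemma meas_colsum[measurable]: "(\<lambda>a::real^'d^'d. colsum a j) \<in> borel_measurable borel"
  unfolding colsum_def by measurable

lemma meas_cmax[measurable]: "(cmax :: real^'d^'d \<Rightarrow> real) \<in> borel_measurable borel"
proof -
  have "(\<lambda>a::real^'d^'d. Max ((\<lambda>j. colsum a j) ` UNIV)) \<in> borel_measurable borel"
    by (intro borel_measurable_Max) auto
  then show ?thesis unfolding cmax_def[abs_def] .
qed

lemma meas_cmin[measurable]: "(cmin :: real^'d^'d \<Rightarrow> real) \<in> borel_measurable borel"
proof -
  have "(\<lambda>a::real^'d^'d. Min ((\<lambda>j. colsum a j) ` UNIV)) \<in> borel_measurable borel"
    by (intro borel_measurable_Min) auto
  then show ?thesis unfolding cmin_def[abs_def] .
qed

lemma cont_mult: "continuous_on UNIV (\<lambda>p::(real^'d^'d) \<times> (real^'d^'d). fst p ** snd p)"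
  unfolding matrix_matrix_mult_def
  by (intro continuous_on_vec_lambda continuous_intros continuous_on_component continuous_on_fst continuous_on_snd continuous_on_id)

lemma meas_mult[measurable (raw)]:
  fixes f g :: "'x \<Rightarrow> real^'d^'d"
  assumes "f \<in> borel_measurable M" "g \<in> borel_measurable M"
  shows "(\<lambda>x. f x ** g x) \<in> borel_measurable M"
  using borel_measurable_continuous_Pair[OF assms cont_mult] by simp

lemma nonneg_closed: "closed {a :: real^'d^'d. nonneg_mat a}"
proof -
  have "{a :: real^'d^'d. nonneg_mat a} = (\<Inter>i. \<Inter>j. {a. a $ i $ j \<ge> 0})"
    unfolding nonneg_mat_def by auto
  moreover have "closed {a :: real^'d^'d. a $ i $ j \<ge> 0}" for i j
    using closed_Collect_le[OF continuous_on_const cont_entry[of i j]] by simp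
  ultimately show ?thesis by (simp add: closed_INT)
qed

lemma nonneg_borel[measurable]: "{a :: real^'d^'d. nonneg_mat a} \<in> sets borel"
  using nonneg_closed by (rule borel_closed)

lemma mprod_meas:
  fixes mu :: "(real^'d^'d) measure"
  assumes sets: "sets mu = sets borel" and nN: "n \<le> N"
  shows "(\<lambda>x. mprod x m n) \<in> borel_measurable (PiM {..<N} (\<lambda>_. mu))"
  using nN
proof (induction n)
  case 0 then show ?case by (simp add: mprod_def)
next
  case (Suc n)
  show ?case
  proof (cases "m \<le> n")
    case True
    have comp: "(\<lambda>x. x n) \<in> borel_measurable (PiM {..<N} (\<lambda>_. mu))"
      using Suc.prems measurable_component_singleton[of n "{..<N}" "\<lambda>_. mu"]
      by (simp add: measurable_cong_sets[OF refl sets])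
    have "(\<lambda>x. mprod x m n ** x n) \<in> borel_measurable (PiM {..<N} (\<lambda>_. mu))"
      using Suc by (intro meas_mult comp) auto
    then show ?thesis using True by (simp add: mprod_Suc)
  next
    case False
    then show ?thesis by (simp add: mprod_def)
  qed
qed


definition good :: "(real^'d^'d) measure \<Rightarrow> real^'d^'d \<Rightarrow> bool" where
  "good mu a \<longleftrightarrow> nonneg_mat a \<and> cmin a > 0 \<and> a \<in> msupp mu"

lemma mprod_cmax_gen: "cmax (mprod a m n) \<le> (\<Prod>i\<in>{m..<n}. cmax (a i))"
proof (induction n)
  case 0 then show ?case by (simp add: mprod_def cmax_one)
next
  case (Suc n)
  show ?case
  proof (cases "m \<le> n")
    case True
    have "cmax (mprod a m (Suc n)) \<le> cmax (mprod a m n) * cmax (a n)"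
      using True by (simp add: mprod_Suc cmax_mult)
    also have "\<dots> \<le> (\<Prod>i\<in>{m..<n}. cmax (a i)) * cmax (a n)"
      using Suc cmin_le_cmax[of "a n"] cmin_nonneg[of "a n"] by (intro mult_right_mono) auto
    finally show ?thesis using True by (simp add: prod.atLeastLessThan_Suc)
  next
    case False then show ?thesis by (simp add: mprod_def cmax_one)
  qed
qed

lemma mprod_cmin_gen: "(\<And>i. m \<le> i \<Longrightarrow> i < n \<Longrightarrow> nonneg_mat (a i)) \<Longrightarrow>
    (\<Prod>i\<in>{m..<n}. cmin (a i)) \<le> cmin (mprod a m n)"
proof (induction n)
  case 0 then show ?case by (simp add: mprod_def cmin_one)
next
  case (Suc n)
  show ?case
  proof (cases "m \<le> n")
    case True
    have nn: "nonneg_mat (mprod a m n)"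
      unfolding mprod_wprod using Suc.prems by (intro wprod_nonneg) auto
    have "(\<Prod>i\<in>{m..<Suc n}. cmin (a i)) = (\<Prod>i\<in>{m..<n}. cmin (a i)) * cmin (a n)"
      using True by (simp add: prod.atLeastLessThan_Suc)
    also have "\<dots> \<le> cmin (mprod a m n) * cmin (a n)"
      using Suc cmin_nonneg[of "a n"] by (intro mult_right_mono) auto
    also have "\<dots> \<le> cmin (mprod a m (Suc n))"
      using Suc.prems True nn by (simp add: mprod_Suc cmin_mult)
    finally show ?thesis .
  next
    case False then show ?thesis by (simp add: mprod_def cmin_one)
  qed
qed

lemma mprod_log_bounds:
  assumes T: "\<And>i. m \<le> i \<Longrightarrow> i < n \<Longrightarrow> nonneg_mat (a i) \<and> cmin (a i) > 0"
  shows "(\<Sum>i\<in>{m..<n}. ln (cmin (a i))) \<le> ln (cmax (mprod a m n))"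
    and "ln (cmax (mprod a m n)) \<le> (\<Sum>i\<in>{m..<n}. ln (cmax (a i)))"
    and "cmin (mprod a m n) > 0"
proof -
  have p1: "(\<Prod>i\<in>{m..<n}. cmin (a i)) > 0" using T by (intro prod_pos) auto
  have c1: "(\<Prod>i\<in>{m..<n}. cmin (a i)) \<le> cmin (mprod a m n)"
    using T by (intro mprod_cmin_gen) auto
  show cpos: "cmin (mprod a m n) > 0" using p1 c1 by linarith
  have cm: "cmin (mprod a m n) \<le> cmax (mprod a m n)" by (rule cmin_le_cmax)
  have pos1: "\<And>i. i \<in> {m..<n} \<Longrightarrow> cmin (a i) > 0" using T by auto
  have "(\<Sum>i\<in>{m..<n}. ln (cmin (a i))) = ln (\<Prod>i\<in>{m..<n}. cmin (a i))"
    by (rule ln_prod[symmetric]) (simp, metis pos1 less_irrefl)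
  also have "\<dots> \<le> ln (cmax (mprod a m n))"
    using p1 c1 cm by (subst ln_le_cancel_iff) auto
  finally show "(\<Sum>i\<in>{m..<n}. ln (cmin (a i))) \<le> ln (cmax (mprod a m n))" .
  have pos2: "\<And>i. i \<in> {m..<n} \<Longrightarrow> cmax (a i) > 0"
    using T cmin_le_cmax by (meson atLeastLessThan_iff less_le_trans)
  have "ln (cmax (mprod a m n)) \<le> ln (\<Prod>i\<in>{m..<n}. cmax (a i))"
    using cpos cm mprod_cmax_gen[of a m n] by (subst ln_le_cancel_iff) auto
  also have "\<dots> = (\<Sum>i\<in>{m..<n}. ln (cmax (a i)))"
    by (rule ln_prod) (simp, metis pos2 less_irrefl)
  finally show "ln (cmax (mprod a m n)) \<le> (\<Sum>i\<in>{m..<n}. ln (cmax (a i)))" .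
qed

lemma mprod_abs_bound:
  assumes T: "\<And>i. m \<le> i \<Longrightarrow> i < n \<Longrightarrow> nonneg_mat (a i) \<and> cmin (a i) > 0"
  shows "\<bar>ln (cmax (mprod a m n))\<bar> \<le> (\<Sum>i\<in>{m..<n}. \<bar>ln (cmax (a i))\<bar> + \<bar>ln (cmin (a i))\<bar>)"
proof -
  have "(\<Sum>i\<in>{m..<n}. ln (cmax (a i))) \<le> (\<Sum>i\<in>{m..<n}. \<bar>ln (cmax (a i))\<bar> + \<bar>ln (cmin (a i))\<bar>)"
    by (intro sum_mono) auto
  moreover have "- (\<Sum>i\<in>{m..<n}. ln (cmin (a i))) \<le> (\<Sum>i\<in>{m..<n}. \<bar>ln (cmax (a i))\<bar> + \<bar>ln (cmin (a i))\<bar>)"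
    by (subst sum_negf[symmetric]) (intro sum_mono, auto)
  moreover have "(\<Sum>i\<in>{m..<n}. ln (cmin (a i))) \<le> ln (cmax (mprod a m n))"
    "ln (cmax (mprod a m n)) \<le> (\<Sum>i\<in>{m..<n}. ln (cmax (a i)))"
    using mprod_log_bounds[of m n a] T by blast+
  ultimately show ?thesis by linarith
qed

locale lsetting =
  fixes mu :: "(real^'d^'d) measure"
  assumes prob: "prob_space mu"
    and sets_mu: "sets mu = sets borel"
    and AE_good: "AE a in mu. good mu a"
    and int_h: "integrable mu (\<lambda>a. \<bar>ln (cmax a)\<bar> + \<bar>ln (cmin a)\<bar>)"
begin

abbreviation P :: "nat \<Rightarrow> (nat \<Rightarrow> real^'d^'d) measure" where
  "P n \<equiv> PiM {..<n} (\<lambda>_::nat. mu)"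

definition F :: "nat \<Rightarrow> nat \<Rightarrow> (nat \<Rightarrow> real^'d^'d) \<Rightarrow> real" where
  "F m n x = ln (cmax (mprod x m n))"

definition s :: "nat \<Rightarrow> real" where
  "s n = (\<integral>x. F 0 n x \<partial>P n)"

lemma probP: "prob_space (P n)"
  by (intro prob_space_PiM prob)

lemma pps: "product_prob_space (\<lambda>_::nat. mu)"
  by (simp add: product_prob_space_def product_prob_space_axioms_def product_sigma_finite_def
      prob prob_space_imp_sigma_finite)

lemma borel_mu: "g \<in> borel_measurable borel \<Longrightarrow> g \<in> borel_measurable mu"
  by (simp add: measurable_cong_sets[OF sets_mu refl])

lemma comp_meas: "i < N \<Longrightarrow> (\<lambda>x. x i) \<in> measurable (P N) mu"
  using measurable_component_singleton[of i "{..<N}" "\<lambda>_. mu"] by simp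

lemma F_meas: "n \<le> N \<Longrightarrow> F m n \<in> borel_measurable (P N)"
proof -
  assume "n \<le> N"
  then have [measurable]: "(\<lambda>x. mprod x m n) \<in> borel_measurable (P N)"
    by (rule mprod_meas[OF sets_mu])
  show ?thesis unfolding F_def[abs_def] by measurable
qed

lemma AE_goodP: "AE x in P N. \<forall>i<N. good mu (x i)"
proof -
  have "\<forall>i\<in>{..<N}. AE x in P N. good mu (x i)"
    using AE_PiM_component[of "{..<N}" "\<lambda>_. mu" _ "good mu"] prob AE_good by auto
  then have "AE x in P N. \<forall>i\<in>{..<N}. good mu (x i)"
    by (rule eventually_ball_finite[rotated]) simp
  then show ?thesis by (auto elim: eventually_mono)
qed

lemma comp_int: fixes g :: "real^'d^'d \<Rightarrow> real" shows "i < N \<Longrightarrow> integrable mu g \<Longrightarrow> integrable (P N) (\<lambda>x. g (x i))"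
proof -
  assume i: "i < N" and g: "integrable mu g"
  have d: "distr (P N) mu (\<lambda>x. x i) = mu"
    using distr_PiM_component[of "{..<N}" "\<lambda>_. mu" i] prob i by simp
  have "integrable (distr (P N) mu (\<lambda>x. x i)) g" using d g by simp
  then show ?thesis
    using integrable_distr_eq[OF comp_meas[OF i] borel_measurable_integrable[OF g]] by simp
qed

lemma comp_integral: fixes g :: "real^'d^'d \<Rightarrow> real" shows "i < N \<Longrightarrow> g \<in> borel_measurable mu \<Longrightarrow> (\<integral>x. g (x i) \<partial>P N) = (\<integral>a. g a \<partial>mu)"
proof -
  assume i: "i < N" and g: "g \<in> borel_measurable mu"
  have d: "distr (P N) mu (\<lambda>x. x i) = mu"
    using distr_PiM_component[of "{..<N}" "\<lambda>_. mu" i] prob i by simp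
  have "(\<integral>a. g a \<partial>mu) = (\<integral>a. g a \<partial>distr (P N) mu (\<lambda>x. x i))" by (simp only: d)
  also have "\<dots> = (\<integral>x. g (x i) \<partial>P N)" by (rule integral_distr[OF comp_meas[OF i] g])
  finally show ?thesis by simp
qed

lemma good_T: "good mu a \<Longrightarrow> nonneg_mat a \<and> cmin a > 0"
  by (simp add: good_def)

lemma F_int: "m \<le> n \<Longrightarrow> n \<le> N \<Longrightarrow> integrable (P N) (F m n)"
proof -
  assume mn: "m \<le> n" and nN: "n \<le> N"
  have int: "integrable (P N) (\<lambda>x. \<Sum>i\<in>{m..<n}. \<bar>ln (cmax (x i))\<bar> + \<bar>ln (cmin (x i))\<bar>)"
  proof (rule Bochner_Integration.integrable_sum)
    fix i assume "i \<in> {m..<n}"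
    then have "i < N" using nN by auto
    then show "integrable (P N) (\<lambda>x. \<bar>ln (cmax (x i))\<bar> + \<bar>ln (cmin (x i))\<bar>)"
      using comp_int[OF _ int_h] by simp
  qed
  show ?thesis
  proof (rule Bochner_Integration.integrable_bound[OF int F_meas[OF nN]])
    show "AE x in P N. norm (F m n x) \<le> norm (\<Sum>i\<in>{m..<n}. \<bar>ln (cmax (x i))\<bar> + \<bar>ln (cmin (x i))\<bar>)"
      using AE_goodP
    proof (rule eventually_mono)
      fix x assume g: "\<forall>i<N. good mu (x i)"
      have "\<bar>F m n x\<bar> \<le> (\<Sum>i\<in>{m..<n}. \<bar>ln (cmax (x i))\<bar> + \<bar>ln (cmin (x i))\<bar>)"
        unfolding F_def using g nN by (intro mprod_abs_bound good_T) auto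
      moreover have "(\<Sum>i\<in>{m..<n}. \<bar>ln (cmax (x i))\<bar> + \<bar>ln (cmin (x i))\<bar>) \<ge> 0"
        by (intro sum_nonneg) auto
      ultimately show "norm (F m n x) \<le> norm (\<Sum>i\<in>{m..<n}. \<bar>ln (cmax (x i))\<bar> + \<bar>ln (cmin (x i))\<bar>)"
        by simp
    qed
  qed
qed

lemma s_restrict: "s m = (\<integral>x. F 0 m x \<partial>P (m + n))"
proof -
  interpret pp: product_prob_space "\<lambda>_::nat. mu" UNIV by (rule pps)
  have dr: "distr (P (m + n)) (P m) (\<lambda>x. restrict x {..<m}) = P m"
    using pp.distr_restrict[of "{..<m}" "{..<m + n}"] by simp
  have "s m = (\<integral>x. F 0 m x \<partial>distr (P (m + n)) (P m) (\<lambda>x. restrict x {..<m}))"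
    unfolding s_def by (simp only: dr)
  also have "\<dots> = (\<integral>x. F 0 m (restrict x {..<m}) \<partial>P (m + n))"
    by (rule integral_distr[OF measurable_restrict_subset F_meas]) auto
  also have "\<dots> = (\<integral>x. F 0 m x \<partial>P (m + n))"
    unfolding F_def by (intro Bochner_Integration.integral_cong refl arg_cong[where f=ln] arg_cong[where f=cmax] mprod_cong) auto
  finally show ?thesis .
qed

lemma s_shift: "s n = (\<integral>x. F m (m + n) x \<partial>P (m + n))"
proof -
  interpret pp: product_prob_space "\<lambda>_::nat. mu" UNIV by (rule pps)
  have dr: "distr (P (m + n)) (P n) (\<lambda>\<omega>. \<lambda>j\<in>{..<n}. \<omega> (j + m)) = P n"
    using pp.distr_reorder[of "\<lambda>j. j + m" "{..<n}" "{..<m + n}"] by (simp add: inj_on_def)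
  have meas: "(\<lambda>\<omega>. \<lambda>j\<in>{..<n}. \<omega> (j + m)) \<in> measurable (P (m + n)) (P n)"
    by (intro measurable_restrict measurable_component_singleton) auto
  have "s n = (\<integral>x. F 0 n x \<partial>distr (P (m + n)) (P n) (\<lambda>\<omega>. \<lambda>j\<in>{..<n}. \<omega> (j + m)))"
    unfolding s_def by (simp only: dr)
  also have "\<dots> = (\<integral>x. F 0 n (\<lambda>j\<in>{..<n}. x (j + m)) \<partial>P (m + n))"
    by (rule integral_distr[OF meas F_meas]) auto
  also have "\<dots> = (\<integral>x. F m (m + n) x \<partial>P (m + n))"
  proof (intro Bochner_Integration.integral_cong refl)
    fix x :: "nat \<Rightarrow> real^'d^'d"
    have "mprod (\<lambda>j\<in>{..<n}. x (j + m)) 0 n = mprod (\<lambda>j. x (j + m)) 0 n"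
      by (intro mprod_cong) auto
    also have "\<dots> = mprod x (0 + m) (n + m)" by (rule mprod_shift[symmetric])
    finally show "F 0 n (\<lambda>j\<in>{..<n}. x (j + m)) = F m (m + n) x"
      unfolding F_def by (simp add: add.commute)
  qed
  finally show ?thesis .
qed

lemma subadd: "s (m + n) \<le> s m + s n"
proof -
  have "s (m + n) = (\<integral>x. F 0 (m + n) x \<partial>P (m + n))" by (simp add: s_def)
  also have "\<dots> \<le> (\<integral>x. F 0 m x + F m (m + n) x \<partial>P (m + n))"
  proof (rule integral_mono_AE)
    show "integrable (P (m + n)) (F 0 (m + n))" by (rule F_int) auto
    show "integrable (P (m + n)) (\<lambda>x. F 0 m x + F m (m + n) x)"
      by (intro Bochner_Integration.integrable_add F_int) auto
    show "AE x in P (m + n). F 0 (m + n) x \<le> F 0 m x + F m (m + n) x"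
      using AE_goodP
    proof (rule eventually_mono)
      fix x assume g: "\<forall>i<m + n. good mu (x i)"
      have T: "\<And>i. i < m + n \<Longrightarrow> nonneg_mat (x i) \<and> cmin (x i) > 0" using g good_T by blast
      have c1: "cmin (mprod x 0 m) > 0" by (rule mprod_log_bounds(3)) (use T in auto)
      have c2: "cmin (mprod x m (m + n)) > 0" by (rule mprod_log_bounds(3)) (use T in auto)
      have c3: "cmin (mprod x 0 (m + n)) > 0" by (rule mprod_log_bounds(3)) (use T in auto)
      have p1: "cmax (mprod x 0 m) > 0" using c1 cmin_le_cmax less_le_trans by blast
      have p2: "cmax (mprod x m (m + n)) > 0" using c2 cmin_le_cmax less_le_trans by blast
      have p3: "cmax (mprod x 0 (m + n)) > 0" using c3 cmin_le_cmax less_le_trans by blast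
      have "cmax (mprod x 0 (m + n)) \<le> cmax (mprod x 0 m) * cmax (mprod x m (m + n))"
        using mprod_split[of 0 m "m + n" x] cmax_mult by simp
      then have "ln (cmax (mprod x 0 (m + n))) \<le> ln (cmax (mprod x 0 m) * cmax (mprod x m (m + n)))"
        using p1 p2 p3 by simp
      also have "\<dots> = ln (cmax (mprod x 0 m)) + ln (cmax (mprod x m (m + n)))"
        using p1 p2 by (simp add: ln_mult)
      finally show "F 0 (m + n) x \<le> F 0 m x + F m (m + n) x" unfolding F_def .
    qed
  qed
  also have "\<dots> = (\<integral>x. F 0 m x \<partial>P (m + n)) + (\<integral>x. F m (m + n) x \<partial>P (m + n))"
    by (intro Bochner_Integration.integral_add F_int) auto
  also have "\<dots> = s m + s n" using s_restrict[of m n] s_shift[of n m] by simp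
  finally show ?thesis .
qed

lemma int_lncmin: "integrable mu (\<lambda>a. ln (cmin a))"
proof (rule Bochner_Integration.integrable_bound[OF int_h])
  show "(\<lambda>a. ln (cmin a)) \<in> borel_measurable mu" by (intro borel_mu) measurable
  show "AE a in mu. norm (ln (cmin a)) \<le> norm (\<bar>ln (cmax a)\<bar> + \<bar>ln (cmin a)\<bar>)" by auto
qed

lemma lower: "real n * (\<integral>a. ln (cmin a) \<partial>mu) \<le> s n"
proof -
  have mb: "(\<lambda>a. ln (cmin a)) \<in> borel_measurable mu" by (intro borel_mu) measurable
  have "(\<Sum>i\<in>{0..<n}. \<integral>x. ln (cmin (x i)) \<partial>P n) = (\<Sum>i\<in>{0..<n}. \<integral>a. ln (cmin a) \<partial>mu)"
    by (intro sum.cong refl comp_integral[OF _ mb]) auto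
  then have "real n * (\<integral>a. ln (cmin a) \<partial>mu) = (\<Sum>i\<in>{0..<n}. \<integral>x. ln (cmin (x i)) \<partial>P n)"
    by simp
  also have "\<dots> = (\<integral>x. (\<Sum>i\<in>{0..<n}. ln (cmin (x i))) \<partial>P n)"
    by (rule Bochner_Integration.integral_sum[symmetric]) (auto intro: comp_int int_lncmin)
  also have "\<dots> \<le> (\<integral>x. F 0 n x \<partial>P n)"
  proof (rule integral_mono_AE)
    show "integrable (P n) (\<lambda>x. \<Sum>i\<in>{0..<n}. ln (cmin (x i)))"
      by (rule Bochner_Integration.integrable_sum) (auto intro: comp_int int_lncmin)
    show "integrable (P n) (F 0 n)" by (rule F_int) auto
    show "AE x in P n. (\<Sum>i\<in>{0..<n}. ln (cmin (x i))) \<le> F 0 n x"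
      using AE_goodP
    proof (rule eventually_mono)
      fix x assume g: "\<forall>i<n. good mu (x i)"
      have T: "\<And>i. 0 \<le> i \<Longrightarrow> i < n \<Longrightarrow> nonneg_mat (x i) \<and> cmin (x i) > 0" using g good_T by blast
      show "(\<Sum>i\<in>{0..<n}. ln (cmin (x i))) \<le> F 0 n x"
        unfolding F_def by (rule mprod_log_bounds(1)[OF T])
    qed
  qed
  finally show ?thesis by (simp add: s_def)
qed

lemma s_conv: "(\<lambda>n. s n / real n) \<longlonglongrightarrow> lyap mu"
proof -
  have c: "convergent (\<lambda>n. s n / real n)"
    by (rule fekete[OF subadd lower])
  have "lyap mu = lim (\<lambda>n. s n / real n)"
    unfolding lyap_def s_def F_def opnorm1_eq ..
  then show ?thesis using c by (simp add: convergent_LIMSEQ_iff)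
qed

lemma exists_good:
  assumes "s n < real n * l"
  shows "\<exists>x. (\<forall>i<n. good mu (x i)) \<and> F 0 n x \<le> real n * l"
proof (rule ccontr)
  assume na: "\<not> ?thesis"
  interpret pn: prob_space "P n" by (rule probP)
  have "AE x in P n. real n * l \<le> F 0 n x"
    using AE_goodP by (rule eventually_mono) (use na in force)
  then have "(\<integral>x. real n * l \<partial>P n) \<le> (\<integral>x. F 0 n x \<partial>P n)"
    by (intro integral_mono_AE F_int) auto
  then have "real n * l \<le> s n" by (simp add: s_def pn.prob_space)
  then show False using assms by simp
qed

end


lemma map_shift_nth: "map (\<lambda>i. L ! (i - 1)) [1..<length L + 1] = L"
proof -
  have "[1..<length L + 1] = map Suc [0..<length L]" by (simp add: map_Suc_upt)
  moreover have "map ((\<lambda>i. L ! (i - 1)) \<circ> Suc) [0..<length L] = map (\<lambda>i. L ! i) [0..<length L]"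
    by (simp add: o_def)
  ultimately show ?thesis by (simp only: list.map_comp map_nth)
qed

context lsetting
begin

lemma final:
  assumes C2_rows: "\<And>a. a \<in> gen_semigroup (msupp mu) \<Longrightarrow> (\<forall>i. \<exists>j. a $ i $ j > 0)"
    and C2_pos: "\<exists>a\<in>gen_semigroup (msupp mu). pos_mat a"
  shows "\<forall>\<eta>>exp (lyap mu). \<forall>\<epsilon>>0. \<exists>K\<ge>1. \<exists>a::nat \<Rightarrow> real^'d^'d.
           (\<forall>i\<in>{1..K}. a i \<in> msupp mu) \<and>
           pos_mat (mprod a 1 (K + 1)) \<and>
           opnorm1 (mprod a 1 (K + 1)) \<le> \<epsilon> * \<eta> ^ K \<and>
           spectral_radius (mprod a 1 (K + 1)) \<le> \<epsilon> * \<eta> ^ K"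
proof (intro allI impI)
  fix \<eta> \<epsilon> :: real
  assume eta: "\<eta> > exp (lyap mu)" and eps: "\<epsilon> > 0"
  have etapos: "\<eta> > 0" using eta exp_gt_zero less_trans by blast
  have "lyap mu < ln \<eta>" using eta etapos by (metis exp_less_cancel_iff exp_ln)
  define l where "l = (lyap mu + ln \<eta>) / 2"
  have l1: "lyap mu < l" and l2: "l < ln \<eta>" using \<open>lyap mu < ln \<eta>\<close> by (auto simp: l_def)
  have "eventually (\<lambda>n. s n / real n < l) sequentially"
    using s_conv l1 by (rule order_tendstoD(2))
  then obtain n0 where n0: "\<And>n. n \<ge> n0 \<Longrightarrow> s n / real n < l"
    by (auto simp: eventually_sequentially)
  define n where "n = Suc n0"
  have n1: "n \<ge> 1" by (simp add: n_def)
  have "s n / real n < l" unfolding n_def by (rule n0) simp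
  then have "s n < real n * l" using n1 by (simp add: pos_divide_less_eq mult.commute)
  then obtain x where xg: "\<forall>i<n. good mu (x i)" and xF: "F 0 n x \<le> real n * l"
    using exists_good by blast
  have T: "\<And>i. 0 \<le> i \<Longrightarrow> i < n \<Longrightarrow> nonneg_mat (x i) \<and> cmin (x i) > 0" using xg good_T by blast
  define hm where "hm = mprod x 0 n"
  have "cmin hm > 0" unfolding hm_def by (rule mprod_log_bounds(3)[OF T])
  then have hmpos: "cmax hm > 0" using cmin_le_cmax less_le_trans by blast
  have hmb: "cmax hm \<le> exp l ^ n"
  proof -
    have "cmax hm = exp (ln (cmax hm))" using hmpos by simp
    also have "\<dots> \<le> exp (real n * l)" using xF unfolding F_def hm_def by simp
    also have "\<dots> = exp l ^ n" by (rule exp_of_nat_mult)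
    finally show ?thesis .
  qed
  define H where "H = map x [0..<n]"
  have wH: "wprod H = hm" unfolding H_def hm_def mprod_wprod ..
  have Hsupp: "set H \<subseteq> msupp mu" using xg unfolding H_def good_def by auto
  have Hnn: "\<And>y. y \<in> set H \<Longrightarrow> nonneg_mat y" using xg unfolding H_def good_def by auto
  obtain g where g: "g \<in> gen_semigroup (msupp mu)" "pos_mat g" using C2_pos by blast
  obtain G where G: "set G \<subseteq> msupp mu" "g = wprod G" using gen_wprod[OF g(1)] by blast
  define p where "p = length G"
  define cg where "cg = cmax g"
  have cg0: "cg \<ge> 0" unfolding cg_def using cmin_le_cmax[of g] cmin_nonneg[of g] by linarith
  define \<rho> where "\<rho> = exp l / \<eta>"
  have rho0: "\<rho> > 0" using etapos by (simp add: \<rho>_def)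
  have "exp l < \<eta>" using l2 etapos by (metis exp_less_cancel_iff exp_ln)
  then have rho1: "\<rho> < 1" using etapos by (simp add: \<rho>_def)
  have tpos: "\<epsilon> * \<eta> ^ (2 * p) / (cg ^ 2 + 1) > 0"
    using eps etapos by (intro divide_pos_pos mult_pos_pos zero_less_power) (auto intro: add_nonneg_pos)
  obtain m0 where m0: "\<rho> ^ m0 < \<epsilon> * \<eta> ^ (2 * p) / (cg ^ 2 + 1)"
    using real_arch_pow_inv[OF tpos rho1] by blast
  define m where "m = Suc m0"
  have "1 * m0 \<le> n * m0" using n1 by (rule mult_le_mono1)
  then have nm: "m0 \<le> n * m" unfolding m_def by (metis mult_1 mult_Suc_right trans_le_add2)
  have rhom: "\<rho> ^ (n * m) \<le> \<rho> ^ m0"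
    using nm rho0 rho1 by (intro power_decreasing) auto
  define C where "C = concat (replicate m H)"
  define X where "X = wprod C"
  have setC: "set C \<subseteq> set H" unfolding C_def by (cases m) auto
  have Xgen: "X \<in> gen_semigroup (msupp mu)" unfolding X_def using setC Hsupp by (intro wprod_gen) auto
  have Xnn: "nonneg_mat X" unfolding X_def using setC Hnn by (intro wprod_nonneg) auto
  obtain j where j: "X $ undefined $ j > 0" using C2_rows[OF Xgen] by blast
  define L where "L = G @ C @ G"
  define K where "K = length L"
  have lenC: "length C = m * n" unfolding C_def H_def by (simp add: length_concat sum_list_replicate)
  have K: "K = 2 * p + n * m" unfolding K_def L_def p_def using lenC by simp
  define a where "a = (\<lambda>i. L ! (i - 1))"
  have mp: "mprod a 1 (K + 1) = wprod L"
    unfolding mprod_wprod a_def K_def by (simp only: map_shift_nth)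
  have wL: "wprod L = g ** X ** g"
    unfolding L_def X_def by (simp add: wprod_append G(2) matrix_mul_assoc)
  have posL: "pos_mat (wprod L)" unfolding wL by (rule pos_sandwich[OF g(2) Xnn j])
  have cX: "cmax X \<le> exp l ^ (n * m)"
  proof -
    have "cmax X \<le> cmax hm ^ m" unfolding X_def C_def wH[symmetric] by (rule wprod_replicate_cmax)
    also have "\<dots> \<le> (exp l ^ n) ^ m" using hmpos hmb by (intro power_mono) auto
    finally show ?thesis by (simp add: power_mult)
  qed
  have cX0: "cmax X \<ge> 0" using cmin_le_cmax[of X] cmin_nonneg[of X] by linarith
  have normL: "cmax (wprod L) \<le> \<epsilon> * \<eta> ^ K"
  proof -
    have "cmax (wprod L) \<le> cmax (g ** X) * cg" unfolding wL cg_def by (rule cmax_mult)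
    also have "\<dots> \<le> (cg * cmax X) * cg"
      using cg0 unfolding cg_def by (intro mult_right_mono cmax_mult)
    also have "\<dots> = cg ^ 2 * cmax X" by (simp add: power2_eq_square)
    also have "\<dots> \<le> cg ^ 2 * exp l ^ (n * m)" using cX by (intro mult_left_mono) auto
    also have "exp l ^ (n * m) = \<rho> ^ (n * m) * \<eta> ^ (n * m)"
      using etapos by (simp add: \<rho>_def power_divide)
    also have "cg ^ 2 * (\<rho> ^ (n * m) * \<eta> ^ (n * m)) \<le> (cg ^ 2 + 1) * \<rho> ^ m0 * \<eta> ^ (n * m)"
    proof -
      have "cg ^ 2 * \<rho> ^ (n * m) \<le> (cg ^ 2 + 1) * \<rho> ^ m0"
        using rhom rho0 by (intro mult_mono) auto
      then show ?thesis using etapos by (simp add: mult.assoc[symmetric])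
    qed
    also have "\<dots> \<le> \<epsilon> * \<eta> ^ (2 * p) * \<eta> ^ (n * m)"
    proof -
      have cp: "cg ^ 2 + 1 > 0" by (simp add: add_nonneg_pos)
      have "\<rho> ^ m0 * (cg ^ 2 + 1) < \<epsilon> * \<eta> ^ (2 * p)"
        using m0 cp by (simp add: pos_less_divide_eq)
      then have "(cg ^ 2 + 1) * \<rho> ^ m0 \<le> \<epsilon> * \<eta> ^ (2 * p)"
        by (simp add: mult.commute)
      then show ?thesis using etapos by (intro mult_right_mono) auto
    qed
    also have "\<dots> = \<epsilon> * \<eta> ^ K" unfolding K by (simp add: power_add)
    finally show ?thesis .
  qed
  show "\<exists>K\<ge>1. \<exists>a::nat \<Rightarrow> real^'d^'d.
           (\<forall>i\<in>{1..K}. a i \<in> msupp mu) \<and>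
           pos_mat (mprod a 1 (K + 1)) \<and>
           opnorm1 (mprod a 1 (K + 1)) \<le> \<epsilon> * \<eta> ^ K \<and>
           spectral_radius (mprod a 1 (K + 1)) \<le> \<epsilon> * \<eta> ^ K"
  proof (intro exI conjI)
    show "K \<ge> 1" unfolding K using n1 by (simp add: m_def)
    show "\<forall>i\<in>{1..K}. a i \<in> msupp mu"
    proof
      fix i assume "i \<in> {1..K}"
      then have "L ! (i - 1) \<in> set L" unfolding K_def by auto
      moreover have "set L \<subseteq> msupp mu" unfolding L_def using G(1) setC Hsupp by auto
      ultimately show "a i \<in> msupp mu" unfolding a_def by blast
    qed
    show "pos_mat (mprod a 1 (K + 1))" unfolding mp by (rule posL)
    show "opnorm1 (mprod a 1 (K + 1)) \<le> \<epsilon> * \<eta> ^ K" unfolding mp opnorm1_eq by (rule normL)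
    show "spectral_radius (mprod a 1 (K + 1)) \<le> \<epsilon> * \<eta> ^ K"
      unfolding mp using spectral_radius_le[of "wprod L"] normL by linarith
  qed
qed

end


lemma h_le:
  assumes "nonneg_mat a" "cmin a > 0"
  shows "\<bar>ln (cmax a)\<bar> + \<bar>ln (cmin a)\<bar> \<le> 2 * max 0 (ln (max (cmax a) (inverse (cmin a))))"
proof -
  have c: "cmin a \<le> cmax a" by (rule cmin_le_cmax)
  have cp: "cmax a > 0" using assms c by linarith
  define m where "m = max 0 (ln (max (cmax a) (inverse (cmin a))))"
  have "ln (cmax a) \<le> ln (max (cmax a) (inverse (cmin a)))"
    using cp by (subst ln_le_cancel_iff) auto
  then have m1: "ln (cmax a) \<le> m" unfolding m_def by linarith
  have "ln (inverse (cmin a)) \<le> ln (max (cmax a) (inverse (cmin a)))"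
    using assms by (subst ln_le_cancel_iff) (auto simp: less_max_iff_disj)
  then have "ln (inverse (cmin a)) \<le> m" unfolding m_def by linarith
  then have m2: "- ln (cmin a) \<le> m" using assms by (simp add: ln_inverse)
  have m0: "0 \<le> m" unfolding m_def by simp
  have uv: "ln (cmin a) \<le> ln (cmax a)" using c assms by simp
  show ?thesis using m0 m1 m2 uv unfolding m_def[symmetric] by linarith
qed

lemma logpN_T:
  "nonneg_mat a \<Longrightarrow> cmin a > 0 \<Longrightarrow> logpN a = ennreal (max 0 (ln (max (cmax a) (inverse (cmin a)))))"
  by (simp add: logpN_def iota_eq opnorm1_eq)

lemma logpN_Z: "nonneg_mat a \<Longrightarrow> cmin a = 0 \<Longrightarrow> logpN a = \<infinity>"
  by (simp add: logpN_def iota_eq)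

lemma supp_full:
  fixes mu :: "(real^'d^'d) measure"
  assumes sets: "sets mu = sets borel"
  shows "\<exists>U \<in> null_sets mu. - msupp mu \<subseteq> U"
proof -
  define Fm where "Fm = {ball a e | a e. e > 0 \<and> emeasure mu (ball a e) = 0}"
  have "\<And>S. S \<in> Fm \<Longrightarrow> open S" unfolding Fm_def by auto
  then obtain F' where F': "F' \<subseteq> Fm" "countable F'" "\<Union>F' = \<Union>Fm" by (rule Lindelof) blast
  have "(\<Union>S\<in>F'. S) \<in> null_sets mu"
  proof (rule null_sets_UN'[OF F'(2)])
    fix S assume "S \<in> F'"
    then obtain a e where "S = ball a e" "emeasure mu (ball a e) = 0" using F'(1) unfolding Fm_def by auto
    moreover have "ball a e \<in> sets mu" unfolding sets by simp
    ultimately show "S \<in> null_sets mu" by (simp add: null_sets_def)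
  qed
  moreover have "- msupp mu \<subseteq> (\<Union>S\<in>F'. S)"
  proof
    fix a assume "a \<in> - msupp mu"
    then obtain e where e: "e > 0" "\<not> emeasure mu (ball a e) > 0" unfolding msupp_def by auto
    then have "ball a e \<in> Fm" unfolding Fm_def by (auto simp: not_gr_zero)
    moreover have "a \<in> ball a e" using e(1) by simp
    ultimately have "a \<in> \<Union>Fm" by (rule UnionI)
    then show "a \<in> (\<Union>S\<in>F'. S)" using F'(3) by simp
  qed
  ultimately show ?thesis by blast
qed

theorem lemma2p5:
  fixes M :: "'w measure"
    and N :: "'w \<Rightarrow> nat"
    and A :: "'w \<Rightarrow> nat \<Rightarrow> real^'d^'d"
    and mu :: "(real^'d^'d) measure"
  assumes P: "prob_space M"
    and N_meas: "N \<in> measurable M (count_space UNIV)"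
    and A_meas: "\<And>i. (\<lambda>w. A w i) \<in> borel_measurable M"
    \<comment> \<open>(C1)\<close>
    and N_ge1: "AE w in M. N w \<ge> 1"
    and EN_gt1: "(\<integral>\<^sup>+ w. of_nat (N w) \<partial>M) > 1"
    and EN_fin: "(\<integral>\<^sup>+ w. of_nat (N w) \<partial>M) < \<infinity>"
    and A_nonneg: "\<And>w i. w \<in> space M \<Longrightarrow> nonneg_mat (A w i)"
    and A_nonzero: "\<And>w i. w \<in> space M \<Longrightarrow> (A w i \<noteq> 0 \<longleftrightarrow> 1 \<le> i \<and> i \<le> N w)"
    \<comment> \<open>definition of mu\<close>
    and mu_sets: "sets mu = sets borel"
    and mu_def: "\<And>S. S \<in> sets borel \<Longrightarrow>
        emeasure mu S = (\<integral>\<^sup>+ w. of_nat (card {i\<in>{1..N w}. A w i \<in> S}) \<partial>M)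
                        / (\<integral>\<^sup>+ w. of_nat (N w) \<partial>M)"
    \<comment> \<open>(C2)\<close>
    and C2_rows_cols: "\<And>a. a \<in> gen_semigroup (msupp mu) \<Longrightarrow>
        (\<forall>i. \<exists>j. a $ i $ j > 0) \<and> (\<forall>j. \<exists>i. a $ i $ j > 0)"
    and C2_pos: "\<exists>a\<in>gen_semigroup (msupp mu). pos_mat a"
    \<comment> \<open>moment condition\<close>
    and moment: "(\<integral>\<^sup>+ a. logpN a \<partial>mu) < \<infinity>"
  shows "\<forall>\<eta>>exp (lyap mu). \<forall>\<epsilon>>0. \<exists>K\<ge>1. \<exists>a::nat \<Rightarrow> real^'d^'d.
           (\<forall>i\<in>{1..K}. a i \<in> msupp mu) \<and>
           pos_mat (mprod a 1 (K + 1)) \<and>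
           opnorm1 (mprod a 1 (K + 1)) \<le> \<epsilon> * \<eta> ^ K \<and>
           spectral_radius (mprod a 1 (K + 1)) \<le> \<epsilon> * \<eta> ^ K"
proof -
  define E where "E = (\<integral>\<^sup>+ w. of_nat (N w) \<partial>M)"
  have E0: "E \<noteq> 0" using EN_gt1 unfolding E_def by auto
  have Etop: "E < top" using EN_fin unfolding E_def by simp
  have space_mu: "space mu = UNIV" using sets_eq_imp_space_eq[OF mu_sets] by simp
  have prob: "prob_space mu"
  proof (rule prob_spaceI)
    have "emeasure mu UNIV = (\<integral>\<^sup>+ w. of_nat (card {i\<in>{1..N w}. A w i \<in> UNIV}) \<partial>M) / E"
      using mu_def[of UNIV] unfolding E_def by simp
    also have "\<dots> = E / E"
    proof -
      have "\<And>w. {i\<in>{1..N w}. A w i \<in> UNIV} = {1..N w}" by auto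
      then show ?thesis unfolding E_def by simp
    qed
    also have "\<dots> = 1" using E0 Etop by simp
    finally show "emeasure mu (space mu) = 1" using space_mu by simp
  qed
  have null1: "- {a. nonneg_mat a} \<in> null_sets mu"
  proof -
    have s: "- {a :: real^'d^'d. nonneg_mat a} \<in> sets borel" by (intro borel_comp nonneg_borel)
    have "emeasure mu (- {a. nonneg_mat a}) =
        (\<integral>\<^sup>+ w. of_nat (card {i\<in>{1..N w}. A w i \<in> - {a. nonneg_mat a}}) \<partial>M) / E"
      using mu_def[OF s] unfolding E_def by simp
    also have "(\<integral>\<^sup>+ w. of_nat (card {i\<in>{1..N w}. A w i \<in> - {a. nonneg_mat a}}) \<partial>M) = (\<integral>\<^sup>+ w. 0 \<partial>M)"
      by (intro nn_integral_cong) (simp add: A_nonneg)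
    finally show ?thesis using s mu_sets by (simp add: null_sets_def)
  qed
  define Z where "Z = {a :: real^'d^'d. nonneg_mat a \<and> cmin a = 0}"
  have Zs: "Z \<in> sets borel"
  proof -
    have "{a :: real^'d^'d \<in> space borel. cmin a = 0} \<in> sets borel" by measurable
    then have "{a :: real^'d^'d. nonneg_mat a} \<inter> {a \<in> space borel. cmin a = 0} \<in> sets borel"
      using nonneg_borel by blast
    moreover have "Z = {a :: real^'d^'d. nonneg_mat a} \<inter> {a \<in> space borel. cmin a = 0}"
      unfolding Z_def by auto
    ultimately show ?thesis by simp
  qed
  have null2: "Z \<in> null_sets mu"
  proof -
    have Zm: "Z \<in> sets mu" using Zs mu_sets by simp
    have "top * emeasure mu Z = (\<integral>\<^sup>+ a. top * indicator Z a \<partial>mu)"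
      by (rule nn_integral_cmult_indicator[OF Zm, symmetric])
    also have "\<dots> \<le> (\<integral>\<^sup>+ a. logpN a \<partial>mu)"
      by (intro nn_integral_mono) (auto simp: indicator_def Z_def logpN_Z)
    also have "\<dots> < top" using moment by simp
    finally have "emeasure mu Z = 0" by (auto simp: ennreal_top_mult split: if_splits)
    then show ?thesis using Zm by (simp add: null_sets_def)
  qed
  obtain U where U: "U \<in> null_sets mu" "- msupp mu \<subseteq> U" using supp_full[OF mu_sets] by blast
  have AE_good: "AE a in mu. good mu a"
  proof (rule AE_I')
    show "- {a. nonneg_mat a} \<union> Z \<union> U \<in> null_sets mu" using null1 null2 U(1) by auto
    show "{x \<in> space mu. \<not> good mu x} \<subseteq> - {a. nonneg_mat a} \<union> Z \<union> U"
    proof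
      fix x assume "x \<in> {x \<in> space mu. \<not> good mu x}"
      then have ng: "\<not> good mu x" by simp
      have "cmin x \<ge> 0" by (rule cmin_nonneg)
      then show "x \<in> - {a. nonneg_mat a} \<union> Z \<union> U"
        using ng U(2) unfolding good_def Z_def by auto
    qed
  qed
  define q where "q = (\<lambda>a::real^'d^'d. if a \<in> {a. nonneg_mat a} \<inter> {a \<in> space borel. 0 < cmin a}
      then ennreal (max 0 (ln (max (cmax a) (inverse (cmin a))))) else 0)"
  have qm: "q \<in> borel_measurable mu"
  proof -
    have "{a :: real^'d^'d \<in> space borel. 0 < cmin a} \<in> sets borel" by measurable
    then have "{a. nonneg_mat a} \<inter> {a :: real^'d^'d \<in> space borel. 0 < cmin a} \<in> sets borel"
      using nonneg_borel by blast
    moreover have f1: "(\<lambda>a::real^'d^'d. ennreal (max 0 (ln (max (cmax a) (inverse (cmin a))))))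
        \<in> borel_measurable borel" by measurable
    ultimately have "q \<in> borel_measurable borel" unfolding q_def
      by (intro measurable_If_set[OF f1 measurable_const]) auto
    then show ?thesis by (simp add: measurable_cong_sets[OF mu_sets refl])
  qed
  have qle: "(\<integral>\<^sup>+ a. q a \<partial>mu) < \<infinity>"
  proof -
    have "(\<integral>\<^sup>+ a. q a \<partial>mu) \<le> (\<integral>\<^sup>+ a. logpN a \<partial>mu)"
      by (intro nn_integral_mono) (auto simp: q_def logpN_T)
    then show ?thesis using moment by simp
  qed
  have int_h: "integrable mu (\<lambda>a. \<bar>ln (cmax a)\<bar> + \<bar>ln (cmin a)\<bar>)"
  proof (rule integrableI_bounded)
    show "(\<lambda>a. \<bar>ln (cmax a)\<bar> + \<bar>ln (cmin a)\<bar>) \<in> borel_measurable mu"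
      unfolding measurable_cong_sets[OF mu_sets refl] by measurable
    have "(\<integral>\<^sup>+ a. ennreal (norm (\<bar>ln (cmax a)\<bar> + \<bar>ln (cmin a)\<bar>)) \<partial>mu) \<le> (\<integral>\<^sup>+ a. 2 * q a \<partial>mu)"
    proof (rule nn_integral_mono_AE)
      show "AE a in mu. ennreal (norm (\<bar>ln (cmax a)\<bar> + \<bar>ln (cmin a)\<bar>)) \<le> 2 * q a"
        using AE_good
      proof (rule eventually_mono)
        fix a assume "good mu a"
        then have T: "nonneg_mat a" "cmin a > 0" by (auto simp: good_def)
        have "ennreal (norm (\<bar>ln (cmax a)\<bar> + \<bar>ln (cmin a)\<bar>)) =
            ennreal (\<bar>ln (cmax a)\<bar> + \<bar>ln (cmin a)\<bar>)" by simp
        also have "\<dots> \<le> ennreal (2 * max 0 (ln (max (cmax a) (inverse (cmin a)))))"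
          by (intro ennreal_leI h_le T)
        also have "\<dots> = 2 * q a" using T by (simp add: q_def ennreal_mult)
        finally show "ennreal (norm (\<bar>ln (cmax a)\<bar> + \<bar>ln (cmin a)\<bar>)) \<le> 2 * q a" .
      qed
    qed
    also have "\<dots> = 2 * (\<integral>\<^sup>+ a. q a \<partial>mu)" by (rule nn_integral_cmult[OF qm])
    also have "\<dots> < \<infinity>" using qle by (simp add: ennreal_mult_less_top)
    finally show "(\<integral>\<^sup>+ a. ennreal (norm (\<bar>ln (cmax a)\<bar> + \<bar>ln (cmin a)\<bar>)) \<partial>mu) < \<infinity>" .
  qed
  interpret ls: lsetting mu
    by (rule lsetting.intro[OF prob mu_sets AE_good int_h])
  show ?thesis
    by (rule ls.final) (use C2_rows_cols C2_pos in auto)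
qed

end
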